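(* Let $\mathbf X=\{X_n\}$ and $\mathbf Y=\{Y_n\}$ be general sources such that $$\inf_{m>0}\ \liminf_{n\to\infty}\ \inf_{c\in\mathbb R}\Big\{\Pr\Big\{\log\tfrac{1}{P_{Y_n}(Y_n)}<c+m\Big\}-\Pr\Big\{\log\tfrac{1}{P_{X_n}(X_n)}<c\Big\}\Big\}\ \ge 0 .$$ Then $$\inf_{0<\epsilon<1}\ \liminf_{n\to\infty}\ \inf_{0\le\delta<1-\epsilon}\{c_n^x(\delta+\epsilon)-c_n^y(\delta)\}\ \ge 0 .$$
   Context: Logarithms are natural. A general source $\mathbf X=\{X_n\}_{n\ge1}$ is a sequence of random variables, $X_n$ taking values in a countable set $\mathcal X_n$, with no consistency requirements between different $n$. Similarly $Y_n$ takes values in a countable set $\mathcal Y_n$. For a random variable $Z$ on a countable set $\mathcal Z$ with pmf $P_Z$, list the elements of positive probability as $z_1,z_2,\dots$ (a finite or countably infinite list) with $P_Z(z_1)\ge P_Z(z_2)\ge\cdots$ (ties broken arbitrarily). Set $\delta_0=0$ and $\delta_k=\sum_{i\le k}P_Z(z_i)$. For $\delta\in[0,1)$ define $c^z(\delta)=\log\frac{1}{P_Z(z_k)}$, where $k$ is the unique index with $\delta\in[\delta_{k-1},\delta_k)$. Here $c_n^x$ and $c_n^y$ denote this function built from $P_{X_n}$ and from $P_{Y_n}$ respectively. *)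

theory Defs
  imports "HOL-Probability.Probability"
begin

definition enum_index :: "'a pmf \<Rightarrow> nat set" where
  "enum_index p = (if finite (set_pmf p) then {..<card (set_pmf p)} else UNIV)"

definition sorted_enum :: "'a pmf \<Rightarrow> (nat \<Rightarrow> 'a) \<Rightarrow> bool" where
  "sorted_enum p z \<longleftrightarrow> bij_betw z (enum_index p) (set_pmf p) \<and>
     (\<forall>i\<in>enum_index p. \<forall>j\<in>enum_index p. i \<le> j \<longrightarrow> pmf p (z j) \<le> pmf p (z i))"

text \<open>The function c^z(delta): with delta_k = sum of the first k probabilities (0-based,
  element z k occupies [delta_k, delta_{k+1})), c(delta) = log (1 / P(z_k)).\<close>
definition cfun :: "'a pmf \<Rightarrow> real \<Rightarrow> real" where
  "cfun p \<delta> = (let z = (SOME z. sorted_enum p z);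
      k = (THE k. k \<in> enum_index p \<and> (\<Sum>i<k. pmf p (z i)) \<le> \<delta> \<and> \<delta> < (\<Sum>i\<le>k. pmf p (z i)))
    in ln (1 / pmf p (z k)))"

end

theory Submission imports Defs begin

lemma finite_pmf_ge:
  fixes p :: "'a pmf" assumes t: "t > 0"
  shows "finite {x. t \<le> pmf p x}"
proof (rule ccontr)
  assume inf: "infinite {x. t \<le> pmf p x}"
  obtain n :: nat where n: "real n > 1 / t" using reals_Archimedean2 by blast
  obtain B where B: "finite B" "card B = n" "B \<subseteq> {x. t \<le> pmf p x}"
    using infinite_arbitrarily_large[OF inf] by blast
  have "real n * t = (\<Sum>x\<in>B. t)" using B by simp
  also have "\<dots> \<le> sum (pmf p) B" using B by (intro sum_mono) auto
  also have "\<dots> = measure_pmf.prob p B" using B by (simp add: measure_measure_pmf_finite)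
  also have "\<dots> \<le> 1" by simp
  finally have "real n * t \<le> 1" .
  with n t show False by (simp add: field_simps)
qed

definition pick :: "'a pmf \<Rightarrow> 'a set \<Rightarrow> 'a" where
  "pick p A = (SOME x. x \<in> set_pmf p - A \<and> (\<forall>y\<in>set_pmf p - A. pmf p y \<le> pmf p x))"

lemma pick_ex:
  assumes "set_pmf p - A \<noteq> {}"
  shows "\<exists>x. x \<in> set_pmf p - A \<and> (\<forall>y\<in>set_pmf p - A. pmf p y \<le> pmf p x)"
proof -
  obtain w where w: "w \<in> set_pmf p - A" using assms by blast
  define B where "B = {x \<in> set_pmf p - A. pmf p w \<le> pmf p x}"
  have t: "pmf p w > 0" using w by (simp add: pmf_positive)
  have fin: "finite B" unfolding B_def
    by (rule finite_subset[OF _ finite_pmf_ge[OF t, of p]]) auto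
  have ne: "B \<noteq> {}" using w by (auto simp: B_def)
  obtain x where x: "x \<in> B" "\<forall>y\<in>B. pmf p y \<le> pmf p x"
    using Max_in[OF finite_imageI[OF fin] ] ne fin
    by (metis (no_types, lifting) Max_ge empty_is_image finite_imageI imageE image_eqI)
  show ?thesis
  proof (intro exI[of _ x] conjI ballI)
    show "x \<in> set_pmf p - A" using x by (auto simp: B_def)
    fix y assume y: "y \<in> set_pmf p - A"
    show "pmf p y \<le> pmf p x"
    proof (cases "y \<in> B")
      case True then show ?thesis using x by auto
    next
      case False then have "pmf p y < pmf p w" using y by (auto simp: B_def)
      moreover have "pmf p w \<le> pmf p x" using x by (auto simp: B_def)
      ultimately show ?thesis by simp
    qed
  qed
qed

lemma pick_spec:
  assumes "set_pmf p - A \<noteq> {}"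
  shows "pick p A \<in> set_pmf p - A" "\<And>y. y \<in> set_pmf p - A \<Longrightarrow> pmf p y \<le> pmf p (pick p A)"
  using someI_ex[OF pick_ex[OF assms]] unfolding pick_def by auto

fun greedy :: "'a pmf \<Rightarrow> nat \<Rightarrow> 'a list" where
  "greedy p 0 = []"
| "greedy p (Suc n) = greedy p n @ [pick p (set (greedy p n))]"

definition gz :: "'a pmf \<Rightarrow> nat \<Rightarrow> 'a" where
  "gz p n = pick p (set (greedy p n))"

lemma set_greedy: "set (greedy p n) = gz p ` {..<n}"
  by (induction n) (auto simp: gz_def lessThan_Suc)

lemma gz_eq: "gz p n = pick p (gz p ` {..<n})"
  by (subst gz_def) (simp only: set_greedy)

lemma enum_index_down: "j \<in> enum_index p \<Longrightarrow> i \<le> j \<Longrightarrow> i \<in> enum_index p"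
  by (auto simp: enum_index_def split: if_splits)

lemma gz_rest: assumes "n \<in> enum_index p" shows "set_pmf p - gz p ` {..<n} \<noteq> {}"
proof
  assume e: "set_pmf p - gz p ` {..<n} = {}"
  hence sub: "set_pmf p \<subseteq> gz p ` {..<n}" by blast
  show False
  proof (cases "finite (set_pmf p)")
    case True
    hence "n < card (set_pmf p)" using assms by (simp add: enum_index_def)
    moreover have "card (set_pmf p) \<le> card (gz p ` {..<n})" by (rule card_mono[OF _ sub]) auto
    moreover have "card (gz p ` {..<n}) \<le> n" using card_image_le[of "{..<n}" "gz p"] by simp
    ultimately show False by simp
  next
    case False
    then show False using sub finite_subset by blast
  qed
qed

lemma gz_in: "n \<in> enum_index p \<Longrightarrow> gz p n \<in> set_pmf p - gz p ` {..<n}"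
  using pick_spec(1)[of p "gz p ` {..<n}"] gz_rest[of n p] by (simp add: gz_eq[of p n])

lemma gz_max: "n \<in> enum_index p \<Longrightarrow> y \<in> set_pmf p - gz p ` {..<n} \<Longrightarrow> pmf p y \<le> pmf p (gz p n)"
  using pick_spec(2)[of p "gz p ` {..<n}"] gz_rest[of n p] by (simp add: gz_eq[of p n])

lemma gz_inj: "inj_on (gz p) (enum_index p)"
proof (rule inj_onI)
  fix i j assume i: "i \<in> enum_index p" and j: "j \<in> enum_index p" and eq: "gz p i = gz p j"
  show "i = j"
  proof (rule ccontr)
    assume "i \<noteq> j"
    then consider "i < j" | "j < i" by linarith
    then show False
    proof cases
      case 1 then have "gz p i \<in> gz p ` {..<j}" by auto
      then show False using gz_in[OF j] eq by simp
    next
      case 2 then have "gz p j \<in> gz p ` {..<i}" by auto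
      then show False using gz_in[OF i] eq by simp
    qed
  qed
qed

lemma gz_mono: "i \<le> j \<Longrightarrow> j \<in> enum_index p \<Longrightarrow> pmf p (gz p j) \<le> pmf p (gz p i)"
proof -
  assume ij: "i \<le> j" and j: "j \<in> enum_index p"
  have i: "i \<in> enum_index p" using enum_index_down[OF j ij] .
  have "gz p j \<in> set_pmf p - gz p ` {..<i}" using gz_in[OF j] ij by auto
  then show ?thesis using gz_max[OF i] by blast
qed

lemma gz_image: "gz p ` enum_index p = set_pmf p"
proof (cases "finite (set_pmf p)")
  case True
  let ?N = "card (set_pmf p)"
  have idx: "enum_index p = {..<?N}" using True by (simp add: enum_index_def)
  have sub: "gz p ` {..<?N} \<subseteq> set_pmf p" using gz_in idx by auto
  have "card (gz p ` {..<?N}) = ?N" using card_image[OF gz_inj[of p]] idx by simp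
  then show ?thesis using card_subset_eq[OF True sub] idx by simp
next
  case False
  have idx: "enum_index p = UNIV" using False by (simp add: enum_index_def)
  have sub: "gz p ` UNIV \<subseteq> set_pmf p" using gz_in idx by blast
  show ?thesis
  proof (rule ccontr)
    assume "gz p ` enum_index p \<noteq> set_pmf p"
    then obtain x where x: "x \<in> set_pmf p" "x \<notin> range (gz p)" using sub idx by auto
    have t: "pmf p x > 0" using x by (simp add: pmf_positive)
    have "range (gz p) \<subseteq> {y. pmf p x \<le> pmf p y}"
    proof
      fix y assume "y \<in> range (gz p)"
      then obtain n where "y = gz p n" by auto
      moreover have "x \<in> set_pmf p - gz p ` {..<n}" using x by auto
      ultimately show "y \<in> {y. pmf p x \<le> pmf p y}" using gz_max[of n p x] idx by auto
    qed
    hence "finite (range (gz p))" using finite_pmf_ge[OF t] finite_subset by blast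
    moreover have "inj (gz p)" using gz_inj[of p] idx by simp
    ultimately show False using finite_imageD[of "gz p" UNIV] by simp
  qed
qed

lemma sorted_enum_ex: "\<exists>z. sorted_enum p z"
proof (intro exI[of _ "gz p"])
  show "sorted_enum p (gz p)" unfolding sorted_enum_def bij_betw_def
    using gz_inj[of p] gz_image[of p] gz_mono[of _ _ p] by simp
qed

lemma sum_meas:
  assumes se: "sorted_enum p z" and sub: "{..<n} \<subseteq> enum_index p"
  shows "(\<Sum>i<n. pmf p (z i)) = measure_pmf.prob p (z ` {..<n})"
proof -
  have inj: "inj_on z {..<n}" using se sub unfolding sorted_enum_def bij_betw_def
    using inj_on_subset by blast
  show ?thesis by (simp add: measure_measure_pmf_finite sum.reindex[OF inj])
qed

lemma meas_set_pmf: "measure_pmf.prob p (set_pmf p) = 1"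
  using measure_Int_set_pmf[of p UNIV] by simp

lemma exists_big:
  assumes se: "sorted_enum p z" and d: "\<delta> < 1"
  shows "\<exists>n. {..<n} \<subseteq> enum_index p \<and> \<delta> < (\<Sum>i<n. pmf p (z i))"
proof (cases "finite (set_pmf p)")
  case True
  let ?N = "card (set_pmf p)"
  have idx: "enum_index p = {..<?N}" using True by (simp add: enum_index_def)
  have "z ` {..<?N} = set_pmf p" using se idx unfolding sorted_enum_def bij_betw_def by simp
  hence "(\<Sum>i<?N. pmf p (z i)) = 1" using sum_meas[OF se, of ?N] idx by (simp add: measure_pmf.prob_eq_1 AE_measure_pmf)
  then show ?thesis using idx d by (intro exI[of _ ?N]) simp
next
  case False
  have idx: "enum_index p = UNIV" using False by (simp add: enum_index_def)
  have im: "range z = set_pmf p" using se idx unfolding sorted_enum_def bij_betw_def by simp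
  have inc: "incseq (\<lambda>i. z ` {..<i})" by (auto simp: incseq_def)
  have un: "(\<Union>i. z ` {..<i}) = set_pmf p" using im by auto
  have "(\<lambda>i. measure_pmf.prob p (z ` {..<i})) \<longlonglongrightarrow> measure_pmf.prob p (\<Union>i. z ` {..<i})"
    by (rule measure_pmf.finite_Lim_measure_incseq[OF _ inc]) auto
  hence "(\<lambda>i. measure_pmf.prob p (z ` {..<i})) \<longlonglongrightarrow> 1" using un by (simp add: meas_set_pmf)
  hence "eventually (\<lambda>i. \<delta> < measure_pmf.prob p (z ` {..<i})) sequentially"
    using d by (rule order_tendstoD)
  then obtain n where "\<delta> < measure_pmf.prob p (z ` {..<n})" by (meson eventually_sequentially order_refl)
  then show ?thesis using sum_meas[OF se, of n] idx by (intro exI[of _ n]) simp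
qed

lemma cfun_spec:
  fixes p :: "'a pmf"
  assumes d0: "0 \<le> \<delta>" and d1: "\<delta> < 1"
  obtains z k where "sorted_enum p z" "k \<in> enum_index p" "(\<Sum>i<k. pmf p (z i)) \<le> \<delta>"
    "\<delta> < (\<Sum>i\<le>k. pmf p (z i))" "cfun p \<delta> = ln (1 / pmf p (z k))"
proof -
  define z where "z = (SOME z. sorted_enum p z)"
  have se: "sorted_enum p z" unfolding z_def using someI_ex[OF sorted_enum_ex] .
  define S where "S n = (\<Sum>i<n. pmf p (z i))" for n
  have Smono: "S a \<le> S b" if "a \<le> b" for a b
    unfolding S_def by (rule sum_mono2) (use that in auto)
  obtain n where n: "{..<n} \<subseteq> enum_index p" "\<delta> < S n" using exists_big[OF se d1] S_def by auto
  have n0: "n \<noteq> 0"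
  proof
    assume "n = 0" with n d0 show False by (simp add: S_def)
  qed
  then obtain m where m: "n = Suc m" using not0_implies_Suc by blast
  define k where "k = (LEAST k. \<delta> < S (Suc k))"
  have k1: "\<delta> < S (Suc k)" unfolding k_def by (rule LeastI[of _ m]) (use n m in simp)
  have km: "k \<le> m" unfolding k_def by (rule Least_le) (use n m in simp)
  have kidx: "k \<in> enum_index p" using n m km by auto
  have k2: "S k \<le> \<delta>"
  proof (cases k)
    case 0 then show ?thesis using d0 by (simp add: S_def)
  next
    case (Suc j)
    have "\<not> \<delta> < S (Suc j)" using not_less_Least[of j "\<lambda>k. \<delta> < S (Suc k)"] Suc k_def by simp
    then show ?thesis using Suc by simp
  qed
  have uniq: "k' = k" if "k' \<in> enum_index p \<and> S k' \<le> \<delta> \<and> \<delta> < S (Suc k')" for k'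
  proof (rule ccontr)
    assume "k' \<noteq> k"
    then consider "k' < k" | "k < k'" by linarith
    then show False
    proof cases
      case 1 then have "S (Suc k') \<le> S k" by (intro Smono) simp
      then show False using that k2 by simp
    next
      case 2 then have "S (Suc k) \<le> S k'" by (intro Smono) simp
      then show False using that k1 by simp
    qed
  qed
  have Sk: "S (Suc k) = (\<Sum>i\<le>k. pmf p (z i))" by (simp add: S_def lessThan_Suc_atMost)
  have the: "(THE k. k \<in> enum_index p \<and> (\<Sum>i<k. pmf p (z i)) \<le> \<delta> \<and> \<delta> < (\<Sum>i\<le>k. pmf p (z i))) = k"
    apply (rule the_equality)
    using kidx k2 k1 Sk apply (simp add: S_def)
    using uniq by (simp add: S_def lessThan_Suc_atMost)
  have "cfun p \<delta> = ln (1 / pmf p (z k))"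
    unfolding cfun_def Let_def z_def[symmetric] the ..
  then show ?thesis using that se kidx k2 k1 Sk by (simp add: S_def)
qed

lemma ln_inv_mono: "0 < a \<Longrightarrow> a \<le> b \<Longrightarrow> ln (1 / b) \<le> ln (1 / (a::real))"
  by (simp add: frac_le)

lemma se_props:
  assumes se: "sorted_enum p z" and k: "k \<in> enum_index p"
  shows "z k \<in> set_pmf p" "pmf p (z k) > 0"
proof -
  show z: "z k \<in> set_pmf p" using se k unfolding sorted_enum_def bij_betw_def by auto
  then show "pmf p (z k) > 0" by (simp add: pmf_positive)
qed

lemma cfun_A:
  assumes d0: "0 \<le> \<delta>" and d1: "\<delta> < 1"
  shows "\<delta> < measure_pmf.prob p {x. ln (1 / pmf p x) \<le> cfun p \<delta>}"
proof -
  obtain z k where se: "sorted_enum p z" and k: "k \<in> enum_index p"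
    and s2: "\<delta> < (\<Sum>i\<le>k. pmf p (z i))" and c: "cfun p \<delta> = ln (1 / pmf p (z k))"
    using cfun_spec[OF d0 d1, of p] by metis
  have sub: "{..<Suc k} \<subseteq> enum_index p" using enum_index_down[OF k] by auto
  have "(\<Sum>i\<le>k. pmf p (z i)) = measure_pmf.prob p (z ` {..<Suc k})"
    using sum_meas[OF se sub] by (simp add: lessThan_Suc_atMost)
  also have "\<dots> \<le> measure_pmf.prob p {x. ln (1 / pmf p x) \<le> cfun p \<delta>}"
  proof (rule measure_pmf.finite_measure_mono)
    show "z ` {..<Suc k} \<subseteq> {x. ln (1 / pmf p x) \<le> cfun p \<delta>}"
    proof
      fix x assume "x \<in> z ` {..<Suc k}"
      then obtain i where i: "i \<le> k" "x = z i" by (auto simp: less_Suc_eq_le)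
      have "pmf p (z k) \<le> pmf p (z i)" using se i k enum_index_down[OF k i(1)]
        unfolding sorted_enum_def by blast
      then show "x \<in> {x. ln (1 / pmf p x) \<le> cfun p \<delta>}"
        using ln_inv_mono[OF se_props(2)[OF se k]] i c by simp
    qed
  qed simp
  finally show ?thesis using s2 by simp
qed

lemma cfun_B:
  assumes d0: "0 \<le> \<delta>" and d1: "\<delta> < 1"
    and h: "\<delta> < measure_pmf.prob p {x. ln (1 / pmf p x) < t}"
  shows "cfun p \<delta> < t"
proof (rule ccontr)
  assume "\<not> cfun p \<delta> < t"
  hence tc: "t \<le> cfun p \<delta>" by simp
  obtain z k where se: "sorted_enum p z" and k: "k \<in> enum_index p"
    and s1: "(\<Sum>i<k. pmf p (z i)) \<le> \<delta>" and c: "cfun p \<delta> = ln (1 / pmf p (z k))"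
    using cfun_spec[OF d0 d1, of p] by metis
  have sub: "{..<k} \<subseteq> enum_index p" using enum_index_down[OF k] by auto
  have "{x. ln (1 / pmf p x) < t} \<inter> set_pmf p \<subseteq> z ` {..<k}"
  proof
    fix x assume x: "x \<in> {x. ln (1 / pmf p x) < t} \<inter> set_pmf p"
    then obtain j where j: "j \<in> enum_index p" "x = z j"
      using se unfolding sorted_enum_def bij_betw_def by (metis IntD2 imageE)
    have "j < k"
    proof (rule ccontr)
      assume "\<not> j < k"
      hence "pmf p (z j) \<le> pmf p (z k)" using se j k unfolding sorted_enum_def by auto
      hence "ln (1 / pmf p (z k)) \<le> ln (1 / pmf p (z j))"
        using ln_inv_mono se_props(2)[OF se j(1)] by blast
      then show False using x j tc c by simp
    qed
    then show "x \<in> z ` {..<k}" using j by auto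
  qed
  hence "measure_pmf.prob p ({x. ln (1 / pmf p x) < t} \<inter> set_pmf p) \<le> measure_pmf.prob p (z ` {..<k})"
    by (intro measure_pmf.finite_measure_mono) auto
  hence "measure_pmf.prob p {x. ln (1 / pmf p x) < t} \<le> \<delta>"
    using s1 sum_meas[OF se sub] by (simp add: measure_Int_set_pmf)
  then show False using h by simp
qed

theorem lemma7:
  fixes PX :: "nat \<Rightarrow> 'a pmf" and PY :: "nat \<Rightarrow> 'b pmf"
  assumes "(INF m\<in>{0::real<..}. liminf (\<lambda>n. INF c::real. ereal (
              measure_pmf.prob (PY n) {y. ln (1 / pmf (PY n) y) < c + m}
            - measure_pmf.prob (PX n) {x. ln (1 / pmf (PX n) x) < c}))) \<ge> 0"
  shows "(INF \<epsilon>\<in>{0::real<..<1}. liminf (\<lambda>n. INF \<delta>\<in>{0..<1 - \<epsilon>}.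
              ereal (cfun (PX n) (\<delta> + \<epsilon>) - cfun (PY n) \<delta>))) \<ge> 0"
proof -
  have hyp: "0 \<le> liminf (\<lambda>n. INF c::real. ereal (
              measure_pmf.prob (PY n) {y. ln (1 / pmf (PY n) y) < c + m}
            - measure_pmf.prob (PX n) {x. ln (1 / pmf (PX n) x) < c}))" if "m > 0" for m
    using order_trans[OF assms INF_lower[of m "{0<..}"]] that by simp
  show ?thesis
  proof (rule INF_greatest)
    fix \<epsilon> :: real assume "\<epsilon> \<in> {0<..<1}"
    hence eps: "0 < \<epsilon>" "\<epsilon> < 1" by auto
    show "0 \<le> liminf (\<lambda>n. INF \<delta>\<in>{0..<1 - \<epsilon>}. ereal (cfun (PX n) (\<delta> + \<epsilon>) - cfun (PY n) \<delta>))"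
    proof (rule ereal_le_epsilon2)
      fix e :: real assume e: "0 < e"
      define m where "m = e / 2"
      have m: "m > 0" using e by (simp add: m_def)
      have "eventually (\<lambda>n. ereal (- \<epsilon>) < (INF c::real. ereal (
              measure_pmf.prob (PY n) {y. ln (1 / pmf (PY n) y) < c + m}
            - measure_pmf.prob (PX n) {x. ln (1 / pmf (PX n) x) < c}))) sequentially"
        using hyp[OF m] eps unfolding le_Liminf_iff by simp
      hence ev: "eventually (\<lambda>n. ereal (- e) \<le> (INF \<delta>\<in>{0..<1 - \<epsilon>}. ereal (cfun (PX n) (\<delta> + \<epsilon>) - cfun (PY n) \<delta>))) sequentially"
      proof (rule eventually_mono)
        fix n assume G: "ereal (- \<epsilon>) < (INF c::real. ereal (
              measure_pmf.prob (PY n) {y. ln (1 / pmf (PY n) y) < c + m}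
            - measure_pmf.prob (PX n) {x. ln (1 / pmf (PX n) x) < c}))"
        show "ereal (- e) \<le> (INF \<delta>\<in>{0..<1 - \<epsilon>}. ereal (cfun (PX n) (\<delta> + \<epsilon>) - cfun (PY n) \<delta>))"
        proof (rule INF_greatest)
          fix \<delta> assume "\<delta> \<in> {0..<1 - \<epsilon>}"
          hence d: "0 \<le> \<delta>" "\<delta> < 1 - \<epsilon>" by auto
          define a where "a = cfun (PX n) (\<delta> + \<epsilon>)"
          have A: "\<delta> + \<epsilon> < measure_pmf.prob (PX n) {x. ln (1 / pmf (PX n) x) \<le> a}"
            unfolding a_def using cfun_A[of "\<delta> + \<epsilon>"] d eps by simp
          also have "\<dots> \<le> measure_pmf.prob (PX n) {x. ln (1 / pmf (PX n) x) < a + m}"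
            by (rule measure_pmf.finite_measure_mono) (use m in auto)
          finally have A2: "\<delta> + \<epsilon> < measure_pmf.prob (PX n) {x. ln (1 / pmf (PX n) x) < a + m}" .
          have "ereal (- \<epsilon>) < ereal (
              measure_pmf.prob (PY n) {y. ln (1 / pmf (PY n) y) < (a + m) + m}
            - measure_pmf.prob (PX n) {x. ln (1 / pmf (PX n) x) < a + m})"
            using less_INF_D[OF G, of "a + m"] by simp
          hence "\<delta> < measure_pmf.prob (PY n) {y. ln (1 / pmf (PY n) y) < (a + m) + m}"
            using A2 by simp
          hence "cfun (PY n) \<delta> < a + m + m" using cfun_B[of \<delta> "PY n" "a + m + m"] d eps by simp
          then show "ereal (- e) \<le> ereal (cfun (PX n) (\<delta> + \<epsilon>) - cfun (PY n) \<delta>)"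
            unfolding a_def[symmetric] m_def by simp
        qed
      qed
      have L: "ereal (- e) \<le> liminf (\<lambda>n. INF \<delta>\<in>{0..<1 - \<epsilon>}. ereal (cfun (PX n) (\<delta> + \<epsilon>) - cfun (PY n) \<delta>))"
        by (rule Liminf_bounded[OF ev])
      show "0 \<le> liminf (\<lambda>n. INF \<delta>\<in>{0..<1 - \<epsilon>}. ereal (cfun (PX n) (\<delta> + \<epsilon>) - cfun (PY n) \<delta>)) + ereal e"
        using add_right_mono[OF L, of "ereal e"] by (simp add: zero_ereal_def)
    qed
  qed
qed

end
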